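(* For every integer $q\ge2$ there exists a constant $c_6>0$ depending only on $q$ such that for every positive integer $k$ there exists a positive integer $n\le \exp(c_6k)$ with $s_q(kn)=k$. Consequently, for every $k\ge1$ the number $a_k$ (in base $q$) exists and $a_k=\exp(O_q(k))$.
   Context: For an integer base $q\ge2$, $s_q(m)$ denotes the sum of the base-$q$ digits of the nonnegative integer $m$, and $a_k$ denotes the smallest positive multiple of $k$ with $s_q(a_k)=k$. *)

theory Defs
  imports Complex_Main
begin

function digit_sum :: "nat \<Rightarrow> nat \<Rightarrow> nat" where
  "digit_sum q m = (if q < 2 \<or> m = 0 then 0 else m mod q + digit_sum q (m div q))"
  by auto
termination
  by (relation "measure snd") auto

declare digit_sum.simps[simp del]

definition a_seq :: "nat \<Rightarrow> nat \<Rightarrow> nat" where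
  "a_seq q k = (LEAST m. m > 0 \<and> k dvd m \<and> digit_sum q m = k)"

end

theory Submission
  imports Defs
begin

lemma ds0[simp]: "digit_sum q 0 = 0"
  by (subst digit_sum.simps) simp

lemma ds_rec: "q \<ge> 2 \<Longrightarrow> digit_sum q m = m mod q + digit_sum q (m div q)"
  by (cases "m = 0") (simp, subst digit_sum.simps, simp)

lemma ds_small: "q \<ge> 2 \<Longrightarrow> m < q \<Longrightarrow> digit_sum q m = m"
  by (subst ds_rec) auto

lemma ds_le: "q \<ge> 2 \<Longrightarrow> digit_sum q m \<le> m"
proof (induction m rule: less_induct)
  case (less m)
  show ?case
  proof (cases "m = 0")
    case False
    have "m div q < m" using False less.prems by simp
    then have "digit_sum q (m div q) \<le> m div q" using less by blast
    moreover have "m mod q + m div q \<le> m"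
    proof -
      have "m div q * q + m mod q = m" by simp
      moreover have "m div q \<le> m div q * q" using less.prems by simp
      ultimately show ?thesis by linarith
    qed
    ultimately show ?thesis using ds_rec[OF less.prems, of m] by linarith
  qed simp
qed

lemma ds_split: "q \<ge> 2 \<Longrightarrow> a < q ^ B \<Longrightarrow> digit_sum q (a + q ^ B * b) = digit_sum q a + digit_sum q b"
proof (induction B arbitrary: a)
  case 0
  then show ?case by simp
next
  case (Suc B)
  have q0: "q > 0" using Suc.prems by simp
  have m: "(a + q ^ Suc B * b) mod q = a mod q" by (simp add: mult.assoc)
  have d: "(a + q ^ Suc B * b) div q = a div q + q ^ B * b" using q0 by (simp add: mult.assoc)
  have ad: "a div q < q ^ B" using Suc.prems(2) q0
    by (simp add: div_less_iff_less_mult mult.commute)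
  have "digit_sum q (a + q ^ Suc B * b) = a mod q + digit_sum q (a div q + q ^ B * b)"
    using ds_rec[OF Suc.prems(1), of "a + q ^ Suc B * b"] m d by simp
  also have "... = a mod q + digit_sum q (a div q) + digit_sum q b"
    using Suc.IH[OF Suc.prems(1) ad] by simp
  also have "... = digit_sum q a + digit_sum q b"
    using ds_rec[OF Suc.prems(1), of a] by simp
  finally show ?case .
qed

lemma ds_shift: "q \<ge> 2 \<Longrightarrow> digit_sum q (q ^ B * b) = digit_sum q b"
  using ds_split[of q 0 B b] by simp

lemma ds_diff: "q \<ge> 2 \<Longrightarrow> m - digit_sum q m = (q - 1) * (m div q) + (m div q - digit_sum q (m div q))"
proof -
  assume q: "q \<ge> 2"
  have "m div q * q + m mod q = m" by simp
  moreover have "digit_sum q (m div q) \<le> m div q" using ds_le[OF q] .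
  moreover have "digit_sum q m = m mod q + digit_sum q (m div q)" using ds_rec[OF q] .
  moreover have "m div q * q = (q - 1) * (m div q) + m div q" using q
    by (metis add.commute mult.commute mult_Suc_right Suc_diff_1 less_le_trans numeral_2_eq_2 zero_less_Suc)
  ultimately show ?thesis by linarith
qed

lemma ds_cong: "q \<ge> 2 \<Longrightarrow> (q - 1) dvd (m - digit_sum q m)"
proof (induction m rule: less_induct)
  case (less m)
  show ?case
  proof (cases "m = 0")
    case False
    have "m div q < m" using False less.prems by simp
    then have "(q - 1) dvd (m div q - digit_sum q (m div q))" using less by blast
    then show ?thesis using ds_diff[OF less.prems, of m] by simp
  qed simp
qed

lemma ds_lower: "q \<ge> 2 \<Longrightarrow> (q - 1) * (m div q) \<le> m - digit_sum q m"
  using ds_diff[of q m] by simp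

lemma ds_compl: "q \<ge> 2 \<Longrightarrow> y < q ^ A \<Longrightarrow> digit_sum q y + digit_sum q (q ^ A - 1 - y) = A * (q - 1)"
proof (induction A arbitrary: y)
  case 0
  then show ?case by simp
next
  case (Suc A)
  have q0: "q > 0" using Suc.prems by simp
  define y0 y1 where "y0 = y mod q" and "y1 = y div q"
  have y: "y = y0 + q * y1" unfolding y0_def y1_def by simp
  have y0: "y0 < q" unfolding y0_def using q0 by simp
  have y1: "y1 < q ^ A" unfolding y1_def using Suc.prems(2) q0
    by (simp add: div_less_iff_less_mult mult.commute)
  have c: "q ^ Suc A - 1 - y = (q - 1 - y0) + q * (q ^ A - 1 - y1)"
  proof -
    have "q * y1 + q \<le> q ^ Suc A" using mult_le_mono2[of "y1+1" "q^A" q] y1 by (simp add: algebra_simps)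
    then show ?thesis using y y0 by (simp add: algebra_simps diff_mult_distrib2)
  qed
  have "digit_sum q y = y0 + digit_sum q y1"
    using ds_split[OF Suc.prems(1), of y0 1 y1] y y0 ds_small[OF Suc.prems(1) y0] by simp
  moreover have "digit_sum q (q ^ Suc A - 1 - y) = (q - 1 - y0) + digit_sum q (q ^ A - 1 - y1)"
    using ds_split[OF Suc.prems(1), of "q - 1 - y0" 1] c ds_small[OF Suc.prems(1), of "q - 1 - y0"] q0 by simp
  ultimately show ?case using Suc.IH[OF Suc.prems(1) y1] y0 by simp
qed

lemma ds_mulrep: "q \<ge> 2 \<Longrightarrow> 1 \<le> x \<Longrightarrow> x \<le> q ^ A \<Longrightarrow> digit_sum q (x * (q ^ A - 1)) = A * (q - 1)"
proof -
  assume q: "q \<ge> 2" and x: "1 \<le> x" "x \<le> q ^ A"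
  have e: "x * (q ^ A - 1) = (q ^ A - 1 - (x - 1)) + q ^ A * (x - 1)"
    using x by (simp add: algebra_simps diff_mult_distrib diff_mult_distrib2)
  have "digit_sum q (x * (q ^ A - 1)) = digit_sum q (q ^ A - 1 - (x - 1)) + digit_sum q (x - 1)"
    using e ds_split[OF q, of "q ^ A - 1 - (x - 1)" A "x - 1"] x by simp
  moreover have "x - 1 < q ^ A" using x by simp
  ultimately show ?thesis using ds_compl[OF q, of "x - 1" A] x by (simp add: add.commute)
qed

lemma two_pow_ge: "3 \<le> t \<Longrightarrow> t + 1 \<le> (2::nat) ^ (t - 1)"
proof (induction t rule: dec_induct)
  case base
  then show ?case by simp
next
  case (step t)
  then have "t - 1 + 1 = t" by simp
  then have "(2::nat) ^ (Suc t - 1) = 2 * 2 ^ (t - 1)" by (metis Suc_eq_plus1 diff_Suc_1 power_Suc)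
  then show ?case using step by simp
qed

lemma pow_ge: "q \<ge> 2 \<Longrightarrow> 3 \<le> t \<Longrightarrow> q * (t + 1) \<le> q ^ t"
proof -
  assume q: "q \<ge> 2" and t: "3 \<le> t"
  have "t + 1 \<le> 2 ^ (t - 1)" using two_pow_ge[OF t] .
  also have "... \<le> q ^ (t - 1)" using q by (simp add: power_mono)
  finally have "q * (t + 1) \<le> q * q ^ (t - 1)" by (rule mult_le_mono2)
  also have "... = q ^ t" using t by (cases t) auto
  finally show ?thesis .
qed

lemma k_lt_pow: "q \<ge> 2 \<Longrightarrow> k < q ^ k"
proof -
  assume q: "q \<ge> 2"
  have "k < 2 ^ k" by (rule less_exp)
  also have "... \<le> q ^ k" using q by (simp add: power_mono)
  finally show ?thesis .
qed

lemma large_case: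
  assumes q: "q \<ge> 2" and k: "k \<ge> 3 * q"
  shows "\<exists>n\<ge>1. n \<le> q ^ (2 * k) \<and> digit_sum q (k * n) = k"
proof -
  define A where "A = (k - digit_sum q k) div (q - 1)"
  have dv: "(q - 1) dvd (k - digit_sum q k)" using ds_cong[OF q] .
  have kA: "k - digit_sum q k = (q - 1) * A" unfolding A_def using dv by simp
  have dsle: "digit_sum q k \<le> k" using ds_le[OF q] .
  have "(q - 1) * (k div q) \<le> (q - 1) * A" using ds_lower[OF q, of k] kA by simp
  then have Age: "k div q \<le> A" using q by simp
  have "(q - 1) * A \<le> k" using kA by linarith
  moreover have "A \<le> (q - 1) * A" using q by (simp add: Suc_le_eq)
  ultimately have Ale: "A \<le> k" by linarith
  define t where "t = k div q"
  have "3 * q div q \<le> k div q" using k by (rule div_le_mono)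
  then have t3: "3 \<le> t" unfolding t_def using q by simp
  have "k < q * (t + 1)"
  proof -
    have "q * t + k mod q = k" unfolding t_def by simp
    moreover have "k mod q < q" using q by simp
    ultimately show ?thesis by (simp add: algebra_simps)
  qed
  also have "... \<le> q ^ t" using pow_ge[OF q t3] .
  also have "... \<le> q ^ A" using Age q unfolding t_def by (simp add: power_increasing)
  finally have kq: "k < q ^ A" .
  have k1: "1 \<le> k" using k q by simp
  define n where "n = 1 + q ^ k * (q ^ A - 1)"
  have "k * n = k + q ^ k * (k * (q ^ A - 1))" unfolding n_def by (simp add: algebra_simps)
  then have "digit_sum q (k * n) = digit_sum q k + digit_sum q (k * (q ^ A - 1))"
    using ds_split[OF q k_lt_pow[OF q, of k]] by simp
  also have "... = digit_sum q k + A * (q - 1)" using ds_mulrep[OF q k1] kq by simp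
  also have "... = k" using kA dsle by (simp add: mult.commute)
  finally have ds: "digit_sum q (k * n) = k" .
  have "q ^ A \<ge> 1" using q by simp
  then have "n \<le> q ^ k * q ^ A"
  proof -
    have e: "q ^ k * (q ^ A - 1) = q ^ k * q ^ A - q ^ k" by (simp add: diff_mult_distrib2)
    have "q ^ k \<le> q ^ k * q ^ A" using q by simp
    moreover have "1 \<le> q ^ k" using q by simp
    ultimately show ?thesis unfolding n_def e by linarith
  qed
  also have "... = q ^ (k + A)" by (simp add: power_add)
  also have "... \<le> q ^ (2 * k)" using Ale q by (simp add: power_increasing)
  finally have nb: "n \<le> q ^ (2 * k)" .
  have "n \<ge> 1" unfolding n_def by simp
  then show ?thesis using nb ds by blast
qed

lemma pigeon:
  assumes k: "k \<ge> 1"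
  shows "\<exists>i j. i < j \<and> j \<le> k \<and> (q::nat) ^ i mod k = q ^ j mod k"
proof -
  have "\<not> inj_on (\<lambda>i. q ^ i mod k) {0..k}"
  proof
    assume "inj_on (\<lambda>i. q ^ i mod k) {0..k}"
    moreover have "(\<lambda>i. q ^ i mod k) ` {0..k} \<subseteq> {0..<k}" using k by auto
    ultimately have "card {0..k} \<le> card {0..<k}" by (rule card_inj_on_le) simp
    then show False by simp
  qed
  then obtain i j where ij: "i \<in> {0..k}" "j \<in> {0..k}" "i \<noteq> j" "q ^ i mod k = q ^ j mod k"
    unfolding inj_on_def by blast
  show ?thesis
  proof (cases "i < j")
    case True then show ?thesis using ij by auto
  next
    case False then have "j < i" using ij by simp
    then show ?thesis using ij by (metis atLeastAtMost_iff)
  qed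
qed

lemma geo_rec: "(\<Sum>l<Suc L. (q::nat) ^ (l * d)) = 1 + q ^ d * (\<Sum>l<L. q ^ (l * d))"
  apply (subst sum.lessThan_Suc_shift)
  apply (simp add: sum_distrib_left power_add del: sum.lessThan_Suc)
  done

lemma geo_ds: "q \<ge> 2 \<Longrightarrow> d \<ge> 1 \<Longrightarrow> digit_sum q (\<Sum>l<L. q ^ (l * d)) = L"
proof (induction L)
  case 0 then show ?case by simp
next
  case (Suc L)
  have "1 < q ^ d" using Suc.prems by (intro one_less_power) auto
  then have "digit_sum q (\<Sum>l<Suc L. q ^ (l * d)) = digit_sum q 1 + L"
    using geo_rec ds_split[OF Suc.prems(1), of 1 d] Suc by simp
  then show ?case using ds_small[OF Suc.prems(1), of 1] Suc.prems by simp
qed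

lemma geo_lt: "(q::nat) \<ge> 2 \<Longrightarrow> d \<ge> 1 \<Longrightarrow> (\<Sum>l<L. q ^ (l * d)) < q ^ (d * L)"
proof (induction L)
  case 0 then show ?case by simp
next
  case (Suc L)
  have "(\<Sum>l<L. q ^ (l * d)) + 1 \<le> q ^ (d * L)" using Suc by simp
  then have "q ^ d * ((\<Sum>l<L. q ^ (l * d)) + 1) \<le> q ^ d * q ^ (d * L)" by (rule mult_le_mono2)
  moreover have "1 < q ^ d" using Suc.prems by (intro one_less_power) auto
  ultimately have "1 + q ^ d * (\<Sum>l<L. q ^ (l * d)) < q ^ d * q ^ (d * L)"
    by (simp add: algebra_simps)
  moreover have "q ^ d * q ^ (d * L) = q ^ (d * Suc L)" by (simp add: power_add[symmetric])
  ultimately show ?case unfolding geo_rec by simp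
qed

lemma general_case:
  assumes q: "q \<ge> 2" and k: "k \<ge> 1"
  shows "\<exists>n\<ge>1. n \<le> q ^ (k + k * k) \<and> digit_sum q (k * n) = k"
proof -
  obtain i j where ij: "i < j" "j \<le> k" "q ^ i mod k = q ^ j mod k" using pigeon[OF k] by blast
  define d where "d = j - i"
  have d1: "d \<ge> 1" and dk: "d \<le> k" using ij unfolding d_def by auto
  have jd: "j = i + d" using ij unfolding d_def by simp
  have per: "q ^ (i + l * d) mod k = q ^ i mod k" for l
  proof (induction l)
    case 0 then show ?case by simp
  next
    case (Suc l)
    have "q ^ (i + Suc l * d) mod k = (q ^ (i + l * d) * q ^ d) mod k" by (simp add: power_add algebra_simps)
    also have "... = ((q ^ (i + l * d) mod k) * q ^ d) mod k" by (simp add: mod_mult_left_eq)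
    also have "... = ((q ^ i mod k) * q ^ d) mod k" using Suc by simp
    also have "... = q ^ j mod k" by (simp add: mod_mult_left_eq jd power_add)
    finally show ?case using ij by simp
  qed
  define T where "T = (\<Sum>l<k. q ^ (l * d))"
  define m where "m = q ^ i * T"
  have msum: "m = (\<Sum>l<k. q ^ (i + l * d))" unfolding m_def T_def by (simp add: sum_distrib_left power_add)
  have "m mod k = (\<Sum>l<k. q ^ (i + l * d) mod k) mod k" unfolding msum by (simp add: mod_sum_eq)
  also have "... = (k * (q ^ i mod k)) mod k" using per by simp
  finally have "k dvd m" by (simp add: dvd_eq_mod_eq_0)
  then obtain n where n: "m = k * n" by blast
  have dsT: "digit_sum q T = k" unfolding T_def using geo_ds[OF q d1] .
  have dsm: "digit_sum q m = k" unfolding m_def using ds_shift[OF q] dsT by simp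
  then have "m \<noteq> 0" using k by (cases "m = 0") auto
  then have n1: "n \<ge> 1" using n by (cases n) auto
  have "n \<le> m" using n k by simp
  also have "m < q ^ i * q ^ (d * k)" unfolding m_def T_def using geo_lt[OF q d1] q by simp
  also have "... = q ^ (i + d * k)" by (simp add: power_add)
  also have "... \<le> q ^ (k + k * k)" using q ij dk by (intro power_increasing) (auto intro: add_le_mono mult_le_mono1)
  finally show ?thesis using n1 dsm n by auto
qed

lemma core:
  assumes q: "q \<ge> 2" and k: "k \<ge> 1"
  shows "\<exists>n\<ge>1. n \<le> q ^ ((3 * q + 1) * k) \<and> digit_sum q (k * n) = k"
proof (cases "k \<ge> 3 * q")
  case True
  then obtain n where n: "n \<ge> 1" "n \<le> q ^ (2 * k)" "digit_sum q (k * n) = k" using large_case[OF q] by blast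
  have "q ^ (2 * k) \<le> q ^ ((3 * q + 1) * k)" using q by (intro power_increasing) auto
  then show ?thesis using n by (meson le_trans)
next
  case False
  then obtain n where n: "n \<ge> 1" "n \<le> q ^ (k + k * k)" "digit_sum q (k * n) = k" using general_case[OF q k] by blast
  have "k + k * k \<le> (3 * q + 1) * k" using False by (simp add: algebra_simps)
  then have "q ^ (k + k * k) \<le> q ^ ((3 * q + 1) * k)" using q by (intro power_increasing) auto
  then show ?thesis using n by (meson le_trans)
qed

theorem mainTheorem14:
  fixes q :: nat
  assumes "q \<ge> 2"
  shows "(\<exists>c6>0. \<forall>k::nat. k \<ge> 1 \<longrightarrow>
            (\<exists>n::nat. n \<ge> 1 \<and> real n \<le> exp (c6 * real k) \<and> digit_sum q (k * n) = k))
       \<and> (\<forall>k::nat. k \<ge> 1 \<longrightarrow> (\<exists>m::nat. m > 0 \<and> k dvd m \<and> digit_sum q m = k))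
       \<and> (\<exists>C>0. \<forall>k::nat. k \<ge> 1 \<longrightarrow> real (a_seq q k) \<le> exp (C * real k))"
proof -
  have q: "q \<ge> 2" by fact
  define c where "c = real (3 * q + 1) * ln (real q)"
  have c0: "c > 0" unfolding c_def using q by simp
  have P1: "\<exists>n::nat. n \<ge> 1 \<and> real n \<le> exp (c * real k) \<and> digit_sum q (k * n) = k"
    if k: "k \<ge> 1" for k
  proof -
    obtain n where n: "n \<ge> 1" "n \<le> q ^ ((3 * q + 1) * k)" "digit_sum q (k * n) = k"
      using core[OF q k] by blast
    have "real n \<le> real q ^ ((3 * q + 1) * k)" using n(2) by (metis of_nat_le_iff of_nat_power)
    also have "... = exp (ln (real q)) ^ ((3 * q + 1) * k)" using q by simp
    also have "... = exp (real ((3 * q + 1) * k) * ln (real q))" by (rule exp_of_nat_mult[symmetric])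
    also have "real ((3 * q + 1) * k) * ln (real q) = c * real k" unfolding c_def by (simp add: algebra_simps)
    finally show ?thesis using n by blast
  qed
  have P2: "\<forall>k::nat. k \<ge> 1 \<longrightarrow> (\<exists>m::nat. m > 0 \<and> k dvd m \<and> digit_sum q m = k)"
  proof (intro allI impI)
    fix k :: nat assume k: "k \<ge> 1"
    obtain n where n: "n \<ge> 1" "digit_sum q (k * n) = k" using P1[OF k] by blast
    then show "\<exists>m::nat. m > 0 \<and> k dvd m \<and> digit_sum q m = k" using k
      by (intro exI[of _ "k * n"]) auto
  qed
  have P3: "\<forall>k::nat. k \<ge> 1 \<longrightarrow> real (a_seq q k) \<le> exp ((c + 1) * real k)"
  proof (intro allI impI)
    fix k :: nat assume k: "k \<ge> 1"
    obtain n where n: "n \<ge> 1" "real n \<le> exp (c * real k)" "digit_sum q (k * n) = k" using P1[OF k] by blast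
    have "a_seq q k \<le> k * n" unfolding a_seq_def using n k by (intro Least_le) auto
    then have "real (a_seq q k) \<le> real k * real n" by (metis of_nat_le_iff of_nat_mult)
    also have "... \<le> exp (real k) * exp (c * real k)"
    proof (rule mult_mono)
      show "real k \<le> exp (real k)" using exp_ge_add_one_self[of "real k"] by linarith
    qed (use n in auto)
    also have "... = exp ((c + 1) * real k)" by (simp add: exp_add[symmetric] algebra_simps)
    finally show "real (a_seq q k) \<le> exp ((c + 1) * real k)" .
  qed
  show ?thesis using P1 P2 P3 c0
    by (intro conjI exI[of _ c] exI[of _ "c + 1"]) auto
qed

end
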